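(* Let $m\geq 2$ and $n\geq 3$ be integers. The Drazin index of the adjacency matrix of the oriented Dutch windmill graph $D^m_n$ is $n-1$.
   Context: For integers $m\geq 1$, $n\geq 3$, the oriented Dutch windmill graph $D^m_n$ is the directed graph with vertex set $V=\{1,2,\ldots,m(n-1)+1\}$ whose directed edges $(a,b)$ are exactly: $(1,(k-1)(n-1)+2)$ for $k\in\{1,\ldots,m\}$; $((k-1)(n-1)+i,(k-1)(n-1)+i+1)$ for $k\in\{1,\ldots,m\}$ and $i\in\{2,\ldots,n-1\}$; and $((k-1)(n-1)+n,1)$ for $k\in\{1,\ldots,m\}$. Its adjacency matrix $M=(a_{ij})$ has $a_{ij}=1$ if $(i,j)$ is an edge and $0$ otherwise. The Drazin index $\operatorname{ind}(A)$ of a square matrix $A$ is the least nonnegative integer $k$ such that there is a matrix $X$ with $A^{k+1}X=A^k$, $XAX=X$, $AX=XA$; equivalently, the multiplicity of $0$ as a root of the minimal polynomial of $A$. *)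

theory Defs
  imports "Jordan_Normal_Form.Matrix"
begin

definition windmill_nv :: "nat \<Rightarrow> nat \<Rightarrow> nat" where
  "windmill_nv m n = m * (n - 1) + 1"

definition windmill_edge :: "nat \<Rightarrow> nat \<Rightarrow> nat \<Rightarrow> nat \<Rightarrow> bool" where
  "windmill_edge m n a b \<longleftrightarrow>
     (\<exists>k\<in>{1..m}. (a = 1 \<and> b = (k - 1) * (n - 1) + 2)
        \<or> (\<exists>i\<in>{2..n-1}. a = (k - 1) * (n - 1) + i \<and> b = (k - 1) * (n - 1) + i + 1)
        \<or> (a = (k - 1) * (n - 1) + n \<and> b = 1))"

text \<open>Adjacency matrix; row/column index i (0-based) corresponds to vertex i+1.\<close>
definition windmill_adj :: "nat \<Rightarrow> nat \<Rightarrow> real mat" where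
  "windmill_adj m n = mat (windmill_nv m n) (windmill_nv m n)
     (\<lambda>(i, j). if windmill_edge m n (i + 1) (j + 1) then 1 else 0)"

definition drazin_index :: "'a::comm_ring_1 mat \<Rightarrow> nat" where
  "drazin_index A = (LEAST k. \<exists>X \<in> carrier_mat (dim_row A) (dim_row A).
      A ^\<^sub>m (k + 1) * X = A ^\<^sub>m k \<and> X * A * X = X \<and> A * X = X * A)"

end

theory Submission
  imports Defs
begin


lemma divmod_uniq:
  fixes d :: nat
  assumes "r < d" "s < d" "x*d + r = y*d + s"
  shows "x = y \<and> r = s"
proof -
  have 1: "(x*d + r) div d = x" "(x*d+r) mod d = r" using assms(1) by auto
  have 2: "(y*d + s) div d = y" "(y*d+s) mod d = s" using assms(2) by auto
  have "(x*d + r) div d = (y*d + s) div d" "(x*d + r) mod d = (y*d + s) mod d"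
    using assms(3) by presburger+
  then show ?thesis unfolding 1 2 by simp
qed

lemma edge_hub:
  assumes "n \<ge> 3"
  shows "windmill_edge m n 1 (w+1) \<longleftrightarrow> (\<exists>c<m. w = 1 + c*(n-1))"
proof
  assume "windmill_edge m n 1 (w+1)"
  then obtain k where k: "k \<in> {1..m}" and
    h: "(w+1 = (k - 1) * (n - 1) + 2)
        \<or> (\<exists>i\<in>{2..n-1}. 1 = (k - 1) * (n - 1) + i \<and> w+1 = (k - 1) * (n - 1) + i + 1)
        \<or> (1 = (k - 1) * (n - 1) + n \<and> w+1 = 1)"
    unfolding windmill_edge_def by blast
  have "w + 1 = (k - 1) * (n - 1) + 2" using h assms by auto
  then show "\<exists>c<m. w = 1 + c*(n-1)" using k by (intro exI[of _ "k-1"]) auto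
next
  assume "\<exists>c<m. w = 1 + c*(n-1)"
  then obtain c where "c < m" "w = 1 + c*(n-1)" by auto
  then show "windmill_edge m n 1 (w+1)" unfolding windmill_edge_def
    by (intro bexI[of _ "c+1"]) auto
qed

lemma edge_cyc:
  assumes "n \<ge> 3" "c < m" "p < n - 1" "v = 1 + c*(n-1) + p"
  shows "windmill_edge m n (v+1) (w+1) \<longleftrightarrow> w = (if p < n - 2 then v + 1 else 0)"
proof
  assume "windmill_edge m n (v+1) (w+1)"
  then obtain k where k: "k \<in> {1..m}" and
    h: "(v+1 = 1 \<and> w+1 = (k - 1) * (n - 1) + 2)
        \<or> (\<exists>i\<in>{2..n-1}. v+1 = (k - 1) * (n - 1) + i \<and> w+1 = (k - 1) * (n - 1) + i + 1)
        \<or> (v+1 = (k - 1) * (n - 1) + n \<and> w+1 = 1)"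
    unfolding windmill_edge_def by auto
  show "w = (if p < n - 2 then v + 1 else 0)"
  proof -
    consider (a) "\<exists>i\<in>{2..n-1}. v+1 = (k - 1) * (n - 1) + i \<and> w+1 = (k - 1) * (n - 1) + i + 1"
      | (b) "v+1 = (k - 1) * (n - 1) + n \<and> w+1 = 1" using h assms by auto
    then show ?thesis
    proof cases
      case a
      then obtain i where i: "i \<in> {2..n-1}" "v+1 = (k - 1) * (n - 1) + i" "w+1 = (k - 1) * (n - 1) + i + 1" by auto
      have "2 \<le> i" using i(1) by simp
      then have "c*(n-1) + p = (k-1)*(n-1) + (i - 2)" using i(2) assms(4) by arith
      moreover have "i - 2 < n - 1" using i(1) by auto
      ultimately have "p = i - 2" using divmod_uniq[of p "n-1" "i-2" c "k-1"] assms(3) by auto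
      have "p < n - 2" using i(1) \<open>p = i - 2\<close> assms(1) by auto
      moreover have "w = v + 1" using i(2,3) by linarith
      ultimately show ?thesis by simp
    next
      case b
      have "c*(n-1) + p = (k-1)*(n-1) + (n - 2)" using b assms by auto
      then have "p = n - 2" using divmod_uniq[of p "n-1" "n-2" c "k-1"] assms by auto
      then show ?thesis using b by auto
    qed
  qed
next
  assume w: "w = (if p < n - 2 then v + 1 else 0)"
  show "windmill_edge m n (v+1) (w+1)"
  proof (cases "p < n - 2")
    case True
    then show ?thesis using w assms unfolding windmill_edge_def
      by (intro bexI[of _ "c+1"] disjI2 disjI1 bexI[of _ "p+2"]) auto
  next
    case False
    then have "p = n - 2" using assms by auto
    then show ?thesis using w assms False unfolding windmill_edge_def
      by (intro bexI[of _ "c+1"] disjI2) auto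
  qed
qed



lemma adj_carrier: "windmill_adj m n \<in> carrier_mat (windmill_nv m n) (windmill_nv m n)"
  unfolding windmill_adj_def by auto

lemma adj_index: "i < windmill_nv m n \<Longrightarrow> j < windmill_nv m n \<Longrightarrow>
  windmill_adj m n $$ (i,j) = (if windmill_edge m n (i+1) (j+1) then 1 else 0)"
  unfolding windmill_adj_def by auto

lemma vert_lt: assumes "c < m" "p < n - 1" shows "1 + c*(n-1) + p < windmill_nv m n"
proof -
  have "(c+1)*(n-1) \<le> m*(n-1)" using assms(1) by (intro mult_le_mono1) auto
  moreover have "(c+1)*(n-1) = c*(n-1) + (n-1)" by simp
  ultimately show ?thesis using assms(2) unfolding windmill_nv_def by linarith
qed

lemma pow_add: assumes "A \<in> carrier_mat k k" shows "A ^\<^sub>m (a + b) = A ^\<^sub>m a * A ^\<^sub>m b"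
proof (induction b)
  case 0
  then show ?case using assms by simp
next
  case (Suc b)
  have "A ^\<^sub>m (a + Suc b) = (A ^\<^sub>m a * A ^\<^sub>m b) * A" using Suc by simp
  also have "\<dots> = A ^\<^sub>m a * (A ^\<^sub>m b * A)" using assms by (intro assoc_mult_mat) auto
  finally show ?case by simp
qed

lemma pow_Suc': assumes "A \<in> carrier_mat k k" shows "A ^\<^sub>m (Suc t) = A * A ^\<^sub>m t"
  using pow_add[OF assms, of 1 t] assms by simp

lemma mult_cyc:
  assumes n: "n \<ge> 3" and c: "c < m" and p: "p < n - 1" and v: "v = 1 + c*(n-1) + p"
    and R: "R \<in> carrier_mat (windmill_nv m n) N2" and l: "l < N2"
  shows "(windmill_adj m n * R) $$ (v,l) = R $$ (if p < n - 2 then v + 1 else 0, l)"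
proof -
  let ?N = "windmill_nv m n"
  let ?s = "if p < n - 2 then v + 1 else 0"
  have vN: "v < ?N" using vert_lt[OF c p] v by simp
  have sN: "?s < ?N"
  proof (cases "p < n - 2")
    case True
    then have "v + 1 = 1 + c*(n-1) + (p+1)" "p + 1 < n - 1" using v by auto
    then show ?thesis using vert_lt[OF c, of "p+1"] True by simp
  qed (use vN in auto)
  have "(windmill_adj m n * R) $$ (v,l) = (\<Sum>k\<in>{0..<?N}. windmill_adj m n $$ (v,k) * R $$ (k,l))"
    using vN l R adj_carrier[of m n] by (auto simp: scalar_prod_def intro: sum.cong)
  also have "\<dots> = (\<Sum>k\<in>{0..<?N}. if k = ?s then R $$ (k,l) else 0)"
    by (intro sum.cong refl) (use vN edge_cyc[OF n c p v] in \<open>auto simp: adj_index\<close>)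
  also have "\<dots> = R $$ (?s, l)" using sN by (simp only: sum.delta finite_atLeastLessThan) simp
  finally show ?thesis .
qed

lemma mult_hub:
  assumes n: "n \<ge> 3"
    and R: "R \<in> carrier_mat (windmill_nv m n) N2" and l: "l < N2"
  shows "(windmill_adj m n * R) $$ (0,l) = (\<Sum>c<m. R $$ (1 + c*(n-1), l))"
proof -
  let ?N = "windmill_nv m n"
  let ?F = "(\<lambda>c. 1 + c*(n-1)) ` {..<m}"
  have 0: "0 < ?N" unfolding windmill_nv_def by simp
  have FN: "?F \<subseteq> {0..<?N}" using vert_lt[of _ m 0 n] n by auto
  have inj: "inj_on (\<lambda>c. 1 + c*(n-1)) {..<m}" using n by (auto simp: inj_on_def)
  have "(windmill_adj m n * R) $$ (0,l) = (\<Sum>k\<in>{0..<?N}. windmill_adj m n $$ (0,k) * R $$ (k,l))"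
    using 0 l R adj_carrier[of m n] by (auto simp: scalar_prod_def intro: sum.cong)
  also have "\<dots> = (\<Sum>k\<in>{0..<?N}. if k \<in> ?F then R $$ (k,l) else 0)"
    by (intro sum.cong refl) (use 0 edge_hub[OF n] in \<open>auto simp: adj_index\<close>)
  also have "\<dots> = (\<Sum>k\<in>{k\<in>{0..<?N}. k \<in> ?F}. R $$ (k,l))"
    by (rule sum.inter_filter[symmetric]) simp
  also have "{k\<in>{0..<?N}. k \<in> ?F} = ?F" using FN by auto
  also have "(\<Sum>k\<in>?F. R $$ (k,l)) = (\<Sum>c<m. R $$ (1 + c*(n-1), l))"
    using inj by (simp add: sum.reindex)
  finally show ?thesis .
qed



lemma walk:
  assumes n: "n \<ge> 3" and c: "c < m" and p: "p < n - 1" and v: "v = 1 + c*(n-1) + p"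
    and t: "t \<le> n - 2 - p"
    and R: "R \<in> carrier_mat (windmill_nv m n) N2" and l: "l < N2"
  shows "(windmill_adj m n ^\<^sub>m t * R) $$ (v,l) = R $$ (v + t, l)"
  using t R l
proof (induction t arbitrary: R)
  case 0
  have "v < windmill_nv m n" using vert_lt[OF c p] v by simp
  moreover have "dim_row (windmill_adj m n) = windmill_nv m n" unfolding windmill_adj_def by simp
  ultimately show ?case using 0 by simp
next
  case (Suc t)
  let ?A = "windmill_adj m n"
  have A: "?A \<in> carrier_mat (windmill_nv m n) (windmill_nv m n)" by (rule adj_carrier)
  have "?A ^\<^sub>m Suc t * R = ?A ^\<^sub>m t * (?A * R)"
    using A Suc.prems by (simp add: assoc_mult_mat[of _ "windmill_nv m n" "windmill_nv m n"])
  then have "(?A ^\<^sub>m Suc t * R) $$ (v,l) = (?A * R) $$ (v + t, l)"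
    using Suc.IH[of "?A * R"] Suc.prems A by auto
  also have "\<dots> = R $$ (v + Suc t, l)"
    using mult_cyc[OF n c, of "p + t" "v + t" R N2 l] Suc.prems p v by auto
  finally show ?case .
qed

lemma walk_hub:
  assumes n: "n \<ge> 3" and c: "c < m" and p: "p < n - 1" and v: "v = 1 + c*(n-1) + p"
    and R: "R \<in> carrier_mat (windmill_nv m n) N2" and l: "l < N2"
  shows "(windmill_adj m n ^\<^sub>m (n - 1 - p) * R) $$ (v,l) = R $$ (0, l)"
proof -
  let ?A = "windmill_adj m n"
  have A: "?A \<in> carrier_mat (windmill_nv m n) (windmill_nv m n)" by (rule adj_carrier)
  have e: "n - 1 - p = Suc (n - 2 - p)" using p n by auto
  have "?A ^\<^sub>m (n - 1 - p) * R = ?A ^\<^sub>m (n - 2 - p) * (?A * R)"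
    unfolding e using A R by (simp add: assoc_mult_mat[of _ "windmill_nv m n" "windmill_nv m n"])
  moreover have "(?A ^\<^sub>m (n - 2 - p) * (?A * R)) $$ (v,l) = (?A * R) $$ (v + (n - 2 - p), l)"
    by (rule walk[OF n c p v]) (use R l A in auto)
  moreover have "v + (n - 2 - p) = 1 + c*(n-1) + (n-2)" using v p n by auto
  moreover have "(?A * R) $$ (1 + c*(n-1) + (n-2), l) = R $$ (0, l)"
    using mult_cyc[OF n c, of "n - 2" "1 + c*(n-1) + (n-2)" R N2 l] R l n by simp
  ultimately show ?thesis by simp
qed

lemma hub_cycle:
  assumes n: "n \<ge> 3"
    and R: "R \<in> carrier_mat (windmill_nv m n) N2" and l: "l < N2"
  shows "(windmill_adj m n ^\<^sub>m n * R) $$ (0,l) = real m * R $$ (0, l)"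
proof -
  let ?A = "windmill_adj m n"
  have A: "?A \<in> carrier_mat (windmill_nv m n) (windmill_nv m n)" by (rule adj_carrier)
  have e: "n = Suc (n - 1)" using n by auto
  have eq: "?A ^\<^sub>m n * R = ?A * (?A ^\<^sub>m (n - 1) * R)"
  proof -
    have "?A ^\<^sub>m n = ?A * ?A ^\<^sub>m (n - 1)" using pow_Suc'[OF A, of "n - 1"] e by simp
    then show ?thesis using A R by (simp only:) (rule assoc_mult_mat, auto)
  qed
  have H: "(?A * (?A ^\<^sub>m (n - 1) * R)) $$ (0,l) = (\<Sum>c<m. (?A ^\<^sub>m (n - 1) * R) $$ (1 + c*(n-1), l))"
    by (rule mult_hub[OF n]) (use A R l in auto)
  have "(?A ^\<^sub>m n * R) $$ (0,l) = (\<Sum>c<m. (?A ^\<^sub>m (n - 1) * R) $$ (1 + c*(n-1), l))"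
    by (subst eq, rule H)
  also have "\<dots> = (\<Sum>c<m. R $$ (0, l))"
  proof (intro sum.cong refl)
    fix c assume "c \<in> {..<m}"
    then show "(?A ^\<^sub>m (n - 1) * R) $$ (1 + c*(n-1), l) = R $$ (0, l)"
      using walk_hub[OF n _ _ _ R l, of c 0 "1 + c*(n-1)"] n by simp
  qed
  finally show ?thesis by simp
qed



lemma adj_dim[simp]: "dim_row (windmill_adj m n) = windmill_nv m n"
  "dim_col (windmill_adj m n) = windmill_nv m n"
  unfolding windmill_adj_def by auto

lemma row_shift:
  assumes n: "n \<ge> 3" and c: "c < m" and p: "p < n - 1" and v: "v = 1 + c*(n-1) + p"
    and j: "j \<ge> n - 1 - p" and l: "l < windmill_nv m n"
  shows "(windmill_adj m n ^\<^sub>m j) $$ (v,l) = (windmill_adj m n ^\<^sub>m (j - (n - 1 - p))) $$ (0,l)"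
proof -
  let ?A = "windmill_adj m n"
  have A: "?A \<in> carrier_mat (windmill_nv m n) (windmill_nv m n)" by (rule adj_carrier)
  have "?A ^\<^sub>m j = ?A ^\<^sub>m ((n - 1 - p) + (j - (n - 1 - p)))" using j by simp
  also have "\<dots> = ?A ^\<^sub>m (n - 1 - p) * ?A ^\<^sub>m (j - (n - 1 - p))" by (rule pow_add[OF A])
  finally have eq: "?A ^\<^sub>m j = ?A ^\<^sub>m (n - 1 - p) * ?A ^\<^sub>m (j - (n - 1 - p))" .
  show ?thesis unfolding eq by (rule walk_hub[OF n c p v]) (use A l in auto)
qed

lemma vertex_decomp:
  assumes n: "n \<ge> 3" and i: "i < windmill_nv m n" "i \<noteq> 0"
  obtains c p where "c < m" "p < n - 1" "i = 1 + c*(n-1) + p"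
proof -
  let ?c = "(i - 1) div (n - 1)" and ?p = "(i - 1) mod (n - 1)"
  have "i - 1 < m * (n - 1)" using i unfolding windmill_nv_def by auto
  then have "?c < m" by (rule less_mult_imp_div_less)
  moreover have "?p < n - 1" using n by auto
  moreover have "?c*(n-1) + ?p = i - 1" by (rule div_mult_mod_eq)
  then have "i = 1 + ?c*(n-1) + ?p" using i(2) by linarith
  ultimately show ?thesis using that by blast
qed

lemma key:
  assumes n: "n \<ge> 3"
  shows "windmill_adj m n ^\<^sub>m (2*n - 1) = real m \<cdot>\<^sub>m windmill_adj m n ^\<^sub>m (n - 1)"
proof (rule eq_matI)
  let ?A = "windmill_adj m n"
  let ?N = "windmill_nv m n"
  have A: "?A \<in> carrier_mat ?N ?N" by (rule adj_carrier)
  show "dim_row (?A ^\<^sub>m (2*n - 1)) = dim_row (real m \<cdot>\<^sub>m ?A ^\<^sub>m (n - 1))" by simp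
  show "dim_col (?A ^\<^sub>m (2*n - 1)) = dim_col (real m \<cdot>\<^sub>m ?A ^\<^sub>m (n - 1))" using n by simp
  fix i l assume "i < dim_row (real m \<cdot>\<^sub>m ?A ^\<^sub>m (n - 1))" "l < dim_col (real m \<cdot>\<^sub>m ?A ^\<^sub>m (n - 1))"
  then have i: "i < ?N" and l: "l < ?N" using n by auto
  show "(?A ^\<^sub>m (2*n - 1)) $$ (i, l) = (real m \<cdot>\<^sub>m (?A ^\<^sub>m (n - 1))) $$ (i, l)"
  proof (cases "i = 0")
    case True
    have "?A ^\<^sub>m (2*n - 1) = ?A ^\<^sub>m (n + (n - 1))" using n by (simp add: mult_2)
    also have "\<dots> = ?A ^\<^sub>m n * ?A ^\<^sub>m (n - 1)" by (rule pow_add[OF A])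
    finally have eq: "?A ^\<^sub>m (2*n - 1) = ?A ^\<^sub>m n * ?A ^\<^sub>m (n - 1)" .
    have h: "(?A ^\<^sub>m n * ?A ^\<^sub>m (n - 1)) $$ (0, l) = real m * (?A ^\<^sub>m (n - 1)) $$ (0, l)"
      by (rule hub_cycle[OF n]) (use A l in auto)
    have "(real m \<cdot>\<^sub>m (?A ^\<^sub>m (n - 1))) $$ (i, l) = real m * (?A ^\<^sub>m (n - 1)) $$ (i, l)"
      using i l n by simp
    then show ?thesis unfolding True eq h by simp
  next
    case False
    obtain c p where cp: "c < m" "p < n - 1" "i = 1 + c*(n-1) + p"
      using vertex_decomp[OF n i False] by blast
    have e1: "2*n - 1 - (n - 1 - p) = n + p" using n cp(2) by auto
    have e2: "n - 1 - (n - 1 - p) = p" using cp(2) by auto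
    have s1: "(?A ^\<^sub>m (2*n - 1)) $$ (i, l) = (?A ^\<^sub>m (n + p)) $$ (0, l)"
    proof -
      have "(?A ^\<^sub>m (2*n - 1)) $$ (i, l) = (?A ^\<^sub>m (2*n - 1 - (n - 1 - p))) $$ (0, l)"
        by (rule row_shift[OF n cp]) (use n l in linarith)+
      then show ?thesis by (simp only: e1)
    qed
    have s2: "?A ^\<^sub>m (n + p) = ?A ^\<^sub>m n * ?A ^\<^sub>m p" by (rule pow_add[OF A])
    have s3: "(?A ^\<^sub>m n * ?A ^\<^sub>m p) $$ (0, l) = real m * (?A ^\<^sub>m p) $$ (0, l)"
      by (rule hub_cycle[OF n]) (use A l in auto)
    have s4: "(?A ^\<^sub>m (n - 1)) $$ (i, l) = (?A ^\<^sub>m p) $$ (0, l)"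
    proof -
      have "(?A ^\<^sub>m (n - 1)) $$ (i, l) = (?A ^\<^sub>m (n - 1 - (n - 1 - p))) $$ (0, l)"
        by (rule row_shift[OF n cp]) (use n l in linarith)+
      then show ?thesis by (simp only: e2)
    qed
    have "(real m \<cdot>\<^sub>m (?A ^\<^sub>m (n - 1))) $$ (i, l) = real m * (?A ^\<^sub>m (n - 1)) $$ (i, l)"
      using i l n by simp
    then show ?thesis by (simp only: s1 s2 s3 s4)
  qed
qed



lemma smult_smult_m: "(a::real) \<cdot>\<^sub>m (b \<cdot>\<^sub>m M) = (a * b) \<cdot>\<^sub>m M"
  by (rule eq_matI) auto

lemma one_smult_m: "(1::real) \<cdot>\<^sub>m M = M"
  by (rule eq_matI) auto

theorem theorem3p2:
  fixes m n :: nat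
  assumes "m \<ge> 2" and "n \<ge> 3"
  shows "drazin_index (windmill_adj m n) = n - 1"
proof -
  let ?A = "windmill_adj m n"
  let ?N = "windmill_nv m n"
  have n: "n \<ge> 3" by (rule assms(2))
  have A: "?A \<in> carrier_mat ?N ?N" by (rule adj_carrier)
  let ?P = "\<lambda>k. \<exists>X \<in> carrier_mat ?N ?N.
      ?A ^\<^sub>m (k + 1) * X = ?A ^\<^sub>m k \<and> X * ?A * X = X \<and> ?A * X = X * ?A"
  have P1: "?P (n - 1)"
  proof
    let ?X = "(1 / real m) \<cdot>\<^sub>m ?A ^\<^sub>m (n - 1)"
    show "?X \<in> carrier_mat ?N ?N" using A by simp
    have m0: "real m \<noteq> 0" using assms(1) by simp
    have K: "?A ^\<^sub>m (2*n - 1) = real m \<cdot>\<^sub>m ?A ^\<^sub>m (n - 1)" by (rule key[OF n])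
    have An1: "?A ^\<^sub>m (n - 1 + 1) = ?A ^\<^sub>m n" using n by simp
    have P2: "?A ^\<^sub>m n * ?A ^\<^sub>m (n - 1) = ?A ^\<^sub>m (2*n - 1)"
      using pow_add[OF A, of n "n - 1"] n by (simp add: mult_2)
    have P3: "?A ^\<^sub>m (n - 1) * ?A = ?A ^\<^sub>m n" using n
      by (metis Suc_diff_1 less_le_trans pos2 order_le_less_trans numeral_less_iff pow_mat.simps(2) zero_less_numeral
          le_less_trans)
    have P4: "?A * ?A ^\<^sub>m (n - 1) = ?A ^\<^sub>m n" using pow_Suc'[OF A, of "n - 1"] n by simp
    have c1: "?A ^\<^sub>m (n - 1 + 1) * ?X = ?A ^\<^sub>m (n - 1)"
    proof -
      have "?A ^\<^sub>m (n - 1 + 1) * ?X = (1 / real m) \<cdot>\<^sub>m (?A ^\<^sub>m n * ?A ^\<^sub>m (n - 1))"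
        unfolding An1 by (rule mult_smult_distrib) (use A in auto)
      also have "\<dots> = ((1 / real m) * real m) \<cdot>\<^sub>m ?A ^\<^sub>m (n - 1)"
        unfolding P2 K by (rule smult_smult_m)
      also have "\<dots> = ?A ^\<^sub>m (n - 1)" using m0 by (simp add: one_smult_m)
      finally show ?thesis .
    qed
    have c2: "?X * ?A * ?X = ?X"
    proof -
      have "?X * ?A = (1 / real m) \<cdot>\<^sub>m (?A ^\<^sub>m (n - 1) * ?A)"
        by (rule mult_smult_assoc_mat) (use A in auto)
      also have "\<dots> = (1 / real m) \<cdot>\<^sub>m ?A ^\<^sub>m n" unfolding P3 ..
      finally have "?X * ?A * ?X = ((1 / real m) \<cdot>\<^sub>m ?A ^\<^sub>m n) * ?X" by simp
      also have "\<dots> = (1 / real m) \<cdot>\<^sub>m (?A ^\<^sub>m n * ?X)"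
        by (rule mult_smult_assoc_mat) (use A in auto)
      also have "?A ^\<^sub>m n * ?X = (1 / real m) \<cdot>\<^sub>m (?A ^\<^sub>m n * ?A ^\<^sub>m (n - 1))"
        by (rule mult_smult_distrib) (use A in auto)
      also have "\<dots> = ((1 / real m) * real m) \<cdot>\<^sub>m ?A ^\<^sub>m (n - 1)"
        unfolding P2 K by (rule smult_smult_m)
      also have "\<dots> = ?A ^\<^sub>m (n - 1)" using m0 by (simp add: one_smult_m)
      finally show ?thesis .
    qed
    have c3: "?A * ?X = ?X * ?A"
    proof -
      have "?A * ?X = (1 / real m) \<cdot>\<^sub>m (?A * ?A ^\<^sub>m (n - 1))"
        by (rule mult_smult_distrib) (use A in auto)
      also have "\<dots> = (1 / real m) \<cdot>\<^sub>m (?A ^\<^sub>m (n - 1) * ?A)" unfolding P3 P4 ..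
      also have "\<dots> = ?X * ?A"
        by (rule mult_smult_assoc_mat[symmetric]) (use A in auto)
      finally show ?thesis .
    qed
    show "?A ^\<^sub>m (n - 1 + 1) * ?X = ?A ^\<^sub>m (n - 1) \<and> ?X * ?A * ?X = ?X \<and> ?A * ?X = ?X * ?A"
      using c1 c2 c3 by blast
  qed
  have P2: "n - 1 \<le> k" if Pk: "?P k" for k
  proof (rule ccontr)
    assume "\<not> n - 1 \<le> k"
    then have k: "k < n - 1" by simp
    obtain X where X: "X \<in> carrier_mat ?N ?N" and eq: "?A ^\<^sub>m (k + 1) * X = ?A ^\<^sub>m k"
      using Pk by blast
    define p where "p = n - 2 - k"
    have p: "p < n - 1" using n unfolding p_def by auto
    have c0: "0 < m" "1 < m" using assms(1) by auto
    define a where "a = 1 + 0*(n-1) + p"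
    define b where "b = 1 + 1*(n-1) + p"
    let ?l = "n - 1"
    have lN: "?l < ?N"
    proof -
      have "n - 2 < n - 1" "Suc (n - 2) = n - 1" using n by auto
      then show ?thesis using vert_lt[OF c0(1), of "n - 2" n] by simp
    qed
    have bkN: "b + k < ?N" using vert_lt[OF c0(2), of "n - 2" n] n k unfolding b_def p_def by simp
    have e: "n - 1 - p = k + 1" using k n unfolding p_def by auto
    have ha: "(?A ^\<^sub>m (k + 1) * X) $$ (a, ?l) = X $$ (0, ?l)"
      using walk_hub[OF n c0(1) p a_def X lN] unfolding e .
    have hb: "(?A ^\<^sub>m (k + 1) * X) $$ (b, ?l) = X $$ (0, ?l)"
      using walk_hub[OF n c0(2) p b_def X lN] unfolding e .
    have kp: "k \<le> n - 2 - p" unfolding p_def using k by auto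
    have I: "1\<^sub>m ?N \<in> carrier_mat ?N ?N" by simp
    have "?A ^\<^sub>m k = ?A ^\<^sub>m k * 1\<^sub>m ?N" using A by simp
    then have ea: "(?A ^\<^sub>m k) $$ (a, ?l) = (1\<^sub>m ?N) $$ (a + k, ?l)"
      and eb: "(?A ^\<^sub>m k) $$ (b, ?l) = (1\<^sub>m ?N) $$ (b + k, ?l)"
      using walk[OF n c0(1) p a_def kp I lN] walk[OF n c0(2) p b_def kp I lN] by simp_all
    have "a + k = ?l" unfolding a_def p_def using k n by auto
    then have "(?A ^\<^sub>m k) $$ (a, ?l) = 1" using ea lN by simp
    moreover have "(?A ^\<^sub>m k) $$ (b, ?l) = 0" using eb lN bkN unfolding b_def p_def using n k by simp
    ultimately show False using ha hb eq by simp
  qed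
  show ?thesis unfolding drazin_index_def adj_dim
    by (rule Least_equality) (use P1 P2 in auto)
qed

end
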